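(* Let $K$ be a compact line and $(F_i)_{i\in I}$ a weak*-null family in $\mathrm{NBV}(K)$. If $A\subseteq K$ has finite two-sided height in $K$, then $(F_i)_{i\in I}$ is of type $c_0\ell_1$ over $A$.
   Context: A compact line is a totally ordered set which is compact in its order topology. $\mathrm{NBV}(K)$ is the space of right-continuous real maps of bounded variation on $K$, identified with $C(K)^*$ via $F_\mu(t)=\mu([\min K,t])$. $\lim_{i\in I}a_i=0$ means $\{i:|a_i|\ge\varepsilon\}$ is finite for every $\varepsilon>0$. $(F_i)_{i\in I}$ is weak*-null if $\lim_i\int f\,d\mu_i=0$ for all $f\in C(K)$, $\mu_i$ associated to $F_i$. $(F_i)$ is of type $c_0\ell_1$ over $A$ if $F_i(t)=a_{i,t}+b_{i,t}$ ($i\in I$, $t\in A$) with $\lim_ia_{i,t}=0$ for each $t\in A$ and $\sup_i\sum_{t\in A}|b_{i,t}|<\infty$. For $A\subseteq K$, $t\in A$ is internal to $A$ relative to $K$ if $t\neq\min K,\max K$ and for all $s_1<t<s_2$ in $K$, both $]s_1,t[\cap A$ and $]t,s_2[\cap A$ are nonempty; $\mathrm{Der}(A,K)$ is the set of such points; $\mathrm{Der}_0(A,K)=A$, $\mathrm{Der}_{n+1}(A,K)=\mathrm{Der}(\mathrm{Der}_n(A,K),K)$; $A$ has finite two-sided height in $K$ if $\mathrm{Der}_n(A,K)=\emptyset$ for some natural number $n$. *)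

theory Defs
  imports "HOL-Analysis.Analysis"
begin

text \<open>A compact line is modelled as a type of class linorder_topology (order topology)
  whose universe is compact; K = UNIV.\<close>

definition lim_zero_on :: "'i set \<Rightarrow> ('i \<Rightarrow> real) \<Rightarrow> bool" where
  "lim_zero_on I a \<longleftrightarrow> (\<forall>\<epsilon>>0. finite {i \<in> I. \<epsilon> \<le> \<bar>a i\<bar>})"

definition regular_borel_measure :: "'a::topological_space measure \<Rightarrow> bool" where
  "regular_borel_measure M \<longleftrightarrow> sets M = sets borel \<and> finite_measure M \<and>
     (\<forall>B\<in>sets M. emeasure M B = (SUP C\<in>{C. compact C \<and> C \<subseteq> B}. emeasure M C))"

text \<open>A signed regular Borel measure mu is represented as mu = Mp - Mn with Mp, Mn regular
  finite positive Borel measures; F_mu(t) = mu([min K, t]).\<close>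
definition F_of :: "'a::linorder_topology measure \<Rightarrow> 'a measure \<Rightarrow> 'a \<Rightarrow> real" where
  "F_of Mp Mn t = measure Mp {..t} - measure Mn {..t}"

definition integral_signed :: "'a::topological_space measure \<Rightarrow> 'a measure \<Rightarrow> ('a \<Rightarrow> real) \<Rightarrow> real" where
  "integral_signed Mp Mn f = integral\<^sup>L Mp f - integral\<^sup>L Mn f"

definition weak_star_null :: "'i set \<Rightarrow> ('i \<Rightarrow> 'a::topological_space measure) \<Rightarrow> ('i \<Rightarrow> 'a measure) \<Rightarrow> bool" where
  "weak_star_null I Mp Mn \<longleftrightarrow>
     (\<forall>f::'a \<Rightarrow> real. continuous_on UNIV f \<longrightarrow> lim_zero_on I (\<lambda>i. integral_signed (Mp i) (Mn i) f))"

definition type_c0l1 :: "'i set \<Rightarrow> ('i \<Rightarrow> 'a \<Rightarrow> real) \<Rightarrow> 'a set \<Rightarrow> bool" where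
  "type_c0l1 I F A \<longleftrightarrow> (\<exists>a b. (\<forall>i\<in>I. \<forall>t\<in>A. F i t = a i t + b i t)
     \<and> (\<forall>t\<in>A. lim_zero_on I (\<lambda>i. a i t))
     \<and> (\<exists>C. \<forall>i\<in>I. \<forall>S. S \<subseteq> A \<and> finite S \<longrightarrow> (\<Sum>t\<in>S. \<bar>b i t\<bar>) \<le> C))"

definition Der :: "'a::linorder set \<Rightarrow> 'a set" where
  "Der A = {t \<in> A. (\<exists>s. s < t) \<and> (\<exists>s. t < s) \<and>
      (\<forall>s1 s2. s1 < t \<and> t < s2 \<longrightarrow> {s1<..<t} \<inter> A \<noteq> {} \<and> {t<..<s2} \<inter> A \<noteq> {})}"

definition finite_two_sided_height :: "'a::linorder set \<Rightarrow> bool" where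
  "finite_two_sided_height A \<longleftrightarrow> (\<exists>n::nat. (Der ^^ n) A = {})"

end

theory Submission
  imports Defs
begin


lemma rbm_finite: "regular_borel_measure M \<Longrightarrow> finite_measure M"
  by (simp add: regular_borel_measure_def)

lemma rbm_sets: "regular_borel_measure M \<Longrightarrow> sets M = sets borel"
  by (simp add: regular_borel_measure_def)

lemma rbm_integrable:
  assumes "regular_borel_measure M" "h \<in> borel_measurable borel" "\<And>x. \<bar>h x\<bar> \<le> B"
  shows "integrable M (h :: _ \<Rightarrow> real)"
proof -
  interpret finite_measure M using assms(1) by (simp add: regular_borel_measure_def)
  have "h \<in> borel_measurable M"
    using assms(2) measurable_cong_sets[OF rbm_sets[OF assms(1)] refl] by blast
  then show ?thesis
    by (intro integrable_const_bound[where B=B]) (auto simp: assms(3))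
qed

lemma cont_bounded:
  assumes "compact (UNIV :: 'a::topological_space set)" "continuous_on UNIV (f :: 'a \<Rightarrow> real)"
  shows "\<exists>B. \<forall>x. \<bar>f x\<bar> \<le> B"
proof -
  have "compact (range f)" using compact_continuous_image[OF assms(2,1)] .
  then have "bounded (range f)" by (rule compact_imp_bounded)
  then show ?thesis by (auto simp: bounded_iff)
qed

lemma cont_integrable:
  assumes "compact (UNIV :: 'a::topological_space set)" "regular_borel_measure M" "continuous_on UNIV (f :: 'a \<Rightarrow> real)"
  shows "integrable M f"
proof -
  obtain B where "\<forall>x. \<bar>f x\<bar> \<le> B" using cont_bounded[OF assms(1,3)] by blast
  then show ?thesis using rbm_integrable[OF assms(2) borel_measurable_continuous_onI[OF assms(3)]] by blast
qed

lemma inner_approx: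
  fixes M :: "'a::t2_space measure"
  assumes r: "regular_borel_measure M" and D: "closed D" and d: "\<delta> > 0"
  shows "\<exists>C. compact C \<and> C \<subseteq> - D \<and> measure M (- D - C) < \<delta>"
proof -
  interpret finite_measure M using r by (simp add: regular_borel_measure_def)
  have sD: "- D \<in> sets M" using r D by (simp add: regular_borel_measure_def)
  have eq: "emeasure M (- D) = (SUP C\<in>{C. compact C \<and> C \<subseteq> - D}. emeasure M C)"
    using r sD by (simp add: regular_borel_measure_def)
  show ?thesis
  proof (cases "measure M (- D) < \<delta>")
    case True
    then show ?thesis by (intro exI[of _ "{}"]) auto
  next
    case False
    show ?thesis
    proof (rule ccontr)
      assume neg: "\<not> ?thesis"
      then have le: "measure M C \<le> measure M (- D) - \<delta>" if "compact C" "C \<subseteq> - D" for C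
      proof -
        have sC: "C \<in> sets M" using r that compact_imp_closed[OF that(1)]
          by (simp add: regular_borel_measure_def)
        have "measure M (- D - C) = measure M (- D) - measure M C"
          using sC sD that by (intro finite_measure_Diff) auto
        then show ?thesis using neg that by (smt (verit))
      qed
      have "emeasure M (- D) \<le> ennreal (measure M (- D) - \<delta>)"
        unfolding eq by (rule SUP_least) (use le in \<open>auto simp: emeasure_eq_measure intro: ennreal_leI\<close>)
      then have "measure M (- D) \<le> measure M (- D) - \<delta>"
        using False d by (simp add: emeasure_eq_measure ennreal_le_iff)
      then show False using d by simp
    qed
  qed
qed

lemma Hausdorff_euc: "Hausdorff_space (euclidean :: 'a::t2_space topology)"
  unfolding Hausdorff_space_def by (metis disjnt_def hausdorff open_openin)

lemma urysohn_euc: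
  fixes C D :: "'a::t2_space set"
  assumes cpt: "compact (UNIV :: 'a set)" and "closed C" "closed D" "C \<inter> D = {}"
  obtains k where "continuous_on UNIV k" "\<And>x. 0 \<le> k x \<and> k x \<le> (1::real)"
    "\<And>x. x \<in> C \<Longrightarrow> k x = 0" "\<And>x. x \<in> D \<Longrightarrow> k x = 1"
proof -
  have "normal_space (euclidean :: 'a topology)"
    by (rule compact_Hausdorff_or_regular_imp_normal_space)
       (use cpt Hausdorff_euc in \<open>auto simp: compact_space_def\<close>)
  then obtain f where f: "continuous_map euclidean (top_of_set {0..1::real}) f" "f ` C \<subseteq> {0}" "f ` D \<subseteq> {1}"
    using Urysohn_lemma[of euclidean C D 0 1] assms by (auto simp: disjnt_def)
  have "continuous_on UNIV f \<and> f ` UNIV \<subseteq> {0..1}"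
    using f(1) continuous_map_subtopology_eu[of UNIV "{0..1::real}" f] by (simp add: image_subset_iff Pi_iff)
  then show ?thesis using f by (intro that[of f]) (auto simp: image_subset_iff)
qed

lemma ind_approx:
  fixes M1 M2 :: "'a::t2_space measure"
  assumes cpt: "compact (UNIV :: 'a set)" and r1: "regular_borel_measure M1" and r2: "regular_borel_measure M2"
    and D: "closed D" and d: "(\<delta>::real) > 0"
  shows "\<exists>k. continuous_on UNIV k \<and> (\<forall>x. 0 \<le> k x \<and> k x \<le> 1) \<and>
     (\<integral>x. \<bar>indicator D x - k x\<bar> \<partial>M1) \<le> \<delta> \<and> (\<integral>x. \<bar>indicator D x - k x\<bar> \<partial>M2) \<le> \<delta>"
proof -
  obtain C1 where C1: "compact C1" "C1 \<subseteq> - D" "measure M1 (- D - C1) < \<delta>"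
    using inner_approx[OF r1 D d] by blast
  obtain C2 where C2: "compact C2" "C2 \<subseteq> - D" "measure M2 (- D - C2) < \<delta>"
    using inner_approx[OF r2 D d] by blast
  define C where "C = C1 \<union> C2"
  have cC: "closed C" using C1 C2 by (simp add: C_def compact_imp_closed closed_Un)
  obtain k where k: "continuous_on UNIV k" "\<And>x. 0 \<le> k x \<and> k x \<le> (1::real)"
    "\<And>x. x \<in> C \<Longrightarrow> k x = 0" "\<And>x. x \<in> D \<Longrightarrow> k x = 1"
    using urysohn_euc[OF cpt cC D] C1 C2 by (auto simp: C_def)
  have pt: "\<bar>indicator D x - k x\<bar> \<le> indicator (- D - C) x" for x
    using k(2,3,4)[of x] by (auto simp: indicator_def)
  have bnd: "(\<integral>x. \<bar>indicator D x - k x\<bar> \<partial>M) \<le> measure M (- D - C')"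
    if r: "regular_borel_measure M" and "C' \<subseteq> C" "compact C'" for M C'
  proof -
    interpret finite_measure M using r by (simp add: regular_borel_measure_def)
    have sets: "sets M = sets borel" using r by (simp add: regular_borel_measure_def)
    have mD: "- D - C \<in> sets M" using sets D cC by auto
    have mD': "- D - C' \<in> sets M" using sets D compact_imp_closed[OF that(3)] by auto
    have km[measurable]: "k \<in> borel_measurable borel" by (rule borel_measurable_continuous_onI[OF k(1)])
    have Db[measurable]: "D \<in> sets borel" using D by simp
    have int1: "integrable M (\<lambda>x. \<bar>indicator D x - k x\<bar>)"
      by (rule rbm_integrable[OF r, where B=1]) (measurable, use k in \<open>auto simp: indicator_def\<close>)
    have "(\<integral>x. \<bar>indicator D x - k x\<bar> \<partial>M) \<le> (\<integral>x. indicator (- D - C) x \<partial>M)"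
      by (rule integral_mono[OF int1]) (use mD pt in \<open>auto simp: emeasure_eq_measure\<close>)
    also have "\<dots> = measure M (- D - C)" using mD by simp
    also have "\<dots> \<le> measure M (- D - C')" using mD mD' \<open>C' \<subseteq> C\<close> by (intro finite_measure_mono) auto
    finally show ?thesis .
  qed
  show ?thesis
    using k(1,2) bnd[OF r1, of C1] bnd[OF r2, of C2] C1 C2
    by (intro exI[of _ k]) (auto simp: C_def)
qed

lemma Lam_diff:
  assumes "integrable M1 f" "integrable M1 g" "integrable M2 f" "integrable M2 g"
  shows "integral_signed M1 M2 (\<lambda>x. f x - g x) = integral_signed M1 M2 f - integral_signed M1 M2 (g :: _ \<Rightarrow> real)"
  using assms by (simp add: integral_signed_def)

lemma Lam_abs_le:
  assumes "integrable M1 h" "integrable M2 (h :: _ \<Rightarrow> real)"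
  shows "\<bar>integral_signed M1 M2 h\<bar> \<le> (\<integral>x. \<bar>h x\<bar> \<partial>M1) + (\<integral>x. \<bar>h x\<bar> \<partial>M2)"
proof -
  have "\<bar>integral\<^sup>L M1 h\<bar> \<le> (\<integral>x. \<bar>h x\<bar> \<partial>M1)" using integral_abs_bound[of M1 h] by simp
  moreover have "\<bar>integral\<^sup>L M2 h\<bar> \<le> (\<integral>x. \<bar>h x\<bar> \<partial>M2)" using integral_abs_bound[of M2 h] by simp
  ultimately show ?thesis unfolding integral_signed_def by linarith
qed

lemma Lam_sum:
  assumes "finite S" "\<And>t. t \<in> S \<Longrightarrow> integrable M1 (g t)" "\<And>t. t \<in> S \<Longrightarrow> integrable M2 (g t)"
  shows "integral_signed M1 M2 (\<lambda>x. \<Sum>t\<in>S. c t * g t x) = (\<Sum>t\<in>S. c t * integral_signed M1 M2 (g t :: _ \<Rightarrow> real))"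
proof -
  have "integral\<^sup>L M1 (\<lambda>x. \<Sum>t\<in>S. c t * g t x) = (\<Sum>t\<in>S. c t * integral\<^sup>L M1 (g t))"
    using Bochner_Integration.integral_sum[where I=S and M=M1 and f="\<lambda>t x. c t * g t x"] assms by (simp add: integral_mult_right_zero)
  moreover have "integral\<^sup>L M2 (\<lambda>x. \<Sum>t\<in>S. c t * g t x) = (\<Sum>t\<in>S. c t * integral\<^sup>L M2 (g t))"
    using Bochner_Integration.integral_sum[where I=S and M=M2 and f="\<lambda>t x. c t * g t x"] assms by (simp add: integral_mult_right_zero)
  ultimately show ?thesis by (simp add: integral_signed_def sum_subtractf right_diff_distrib)
qed

lemma sum_bound:
  fixes M1 M2 :: "'a::t2_space measure"
  assumes cpt: "compact (UNIV :: 'a set)" and r1: "regular_borel_measure M1" and r2: "regular_borel_measure M2"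
  and C: "\<forall>f. continuous_on UNIV f \<longrightarrow> (\<forall>x. \<bar>f x\<bar> \<le> 1) \<longrightarrow> \<bar>integral_signed M1 M2 f\<bar> \<le> C"
  and S: "finite S"
  and D: "\<forall>t\<in>S. closed (D t)" and f: "\<forall>t\<in>S. continuous_on UNIV (f t)"
  and g1: "\<forall>t\<in>S. \<forall>x. \<bar>indicator (D t) x - f t x\<bar> \<le> (1::real)"
  and disj: "\<forall>t\<in>S. \<forall>t'\<in>S. t \<noteq> t' \<longrightarrow> (\<forall>x. indicator (D t) x = f t x \<or> indicator (D t') x = f t' x)"
  shows "(\<Sum>t\<in>S. \<bar>integral_signed M1 M2 (\<lambda>x. indicator (D t) x - f t x)\<bar>) \<le> C"
proof -
  define g where "g t x = indicator (D t) x - f t x" for t x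
  define \<sigma> where "\<sigma> t = sgn (integral_signed M1 M2 (g t))" for t
  define h where "h x = (\<Sum>t\<in>S. \<sigma> t * g t x)" for x
  have gm: "g t \<in> borel_measurable borel" if "t \<in> S" for t
  proof -
    have [measurable]: "f t \<in> borel_measurable borel" using f that by (simp add: borel_measurable_continuous_onI)
    have [measurable]: "D t \<in> sets borel" using D that by simp
    show ?thesis unfolding g_def by measurable
  qed
  have gi: "integrable M (g t)" if "t \<in> S" "regular_borel_measure M" for t M
    using rbm_integrable[OF that(2) gm[OF that(1)], of 1] g1 that(1) by (simp add: g_def)
  have sig: "\<bar>\<sigma> t\<bar> \<le> 1" for t by (simp add: \<sigma>_def sgn_real_def)
  have "(\<Sum>t\<in>S. \<bar>integral_signed M1 M2 (g t)\<bar>) = (\<Sum>t\<in>S. \<sigma> t * integral_signed M1 M2 (g t))"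
    by (intro sum.cong) (auto simp: \<sigma>_def sgn_real_def)
  also have "\<dots> = integral_signed M1 M2 h"
    unfolding h_def by (rule Lam_sum[symmetric]) (use S gi r1 r2 in auto)
  finally have eqh: "(\<Sum>t\<in>S. \<bar>integral_signed M1 M2 (g t)\<bar>) = integral_signed M1 M2 h" .
  have hm: "h \<in> borel_measurable borel" unfolding h_def
    by (intro borel_measurable_sum borel_measurable_times borel_measurable_const) (auto simp: gm)
  have h1: "\<bar>h x\<bar> \<le> 1" for x
  proof (cases "\<exists>t\<in>S. g t x \<noteq> 0")
    case False
    then show ?thesis by (simp add: h_def)
  next
    case True
    then obtain t0 where t0: "t0 \<in> S" "g t0 x \<noteq> 0" by blast
    have "h x = \<sigma> t0 * g t0 x + (\<Sum>t\<in>S - {t0}. \<sigma> t * g t x)"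
      unfolding h_def using S t0 by (simp add: sum.remove)
    also have "(\<Sum>t\<in>S - {t0}. \<sigma> t * g t x) = 0"
      using disj t0 by (intro sum.neutral) (auto simp: g_def)
    finally have "h x = \<sigma> t0 * g t0 x" by simp
    moreover have "\<bar>\<sigma> t0 * g t0 x\<bar> \<le> 1"
      using sig[of t0] g1 t0(1) unfolding abs_mult g_def by (simp add: mult_le_one)
    ultimately show ?thesis by simp
  qed
  have "\<bar>integral_signed M1 M2 h\<bar> \<le> C + \<epsilon>" if e: "\<epsilon> > 0" for \<epsilon>
  proof -
    define \<delta> where "\<delta> = \<epsilon> / (2 * (real (card S) + 1))"
    have d: "\<delta> > 0" using e by (simp add: \<delta>_def)
    have "\<forall>t\<in>S. \<exists>k. continuous_on UNIV k \<and> (\<forall>x. 0 \<le> k x \<and> k x \<le> 1) \<and>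
     (\<integral>x. \<bar>indicator (D t) x - k x\<bar> \<partial>M1) \<le> \<delta> \<and> (\<integral>x. \<bar>indicator (D t) x - k x\<bar> \<partial>M2) \<le> \<delta>"
      using ind_approx[OF cpt r1 r2 _ d] D by blast
    then obtain k where k: "\<And>t. t \<in> S \<Longrightarrow> continuous_on UNIV (k t) \<and> (\<forall>x. 0 \<le> k t x \<and> k t x \<le> 1) \<and>
     (\<integral>x. \<bar>indicator (D t) x - k t x\<bar> \<partial>M1) \<le> \<delta> \<and> (\<integral>x. \<bar>indicator (D t) x - k t x\<bar> \<partial>M2) \<le> \<delta>"
      by metis
    define \<Psi> where "\<Psi> x = (\<Sum>t\<in>S. \<sigma> t * (k t x - f t x))" for x
    define \<Phi> where "\<Phi> x = max (-1) (min 1 (\<Psi> x))" for x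
    have \<Psi>c: "continuous_on UNIV \<Psi>" unfolding \<Psi>_def
      using k f by (intro continuous_intros) auto
    have \<Phi>c: "continuous_on UNIV \<Phi>" unfolding \<Phi>_def
      using \<Psi>c by (intro continuous_intros) auto
    have \<Phi>1: "\<bar>\<Phi> x\<bar> \<le> 1" for x by (simp add: \<Phi>_def)
    have CP: "\<bar>integral_signed M1 M2 \<Phi>\<bar> \<le> C" using C \<Phi>c \<Phi>1 by blast
    define e where "e x = (\<Sum>t\<in>S. \<bar>indicator (D t) x - k t x\<bar>)" for x
    have hP: "\<bar>h x - \<Phi> x\<bar> \<le> e x" for x
    proof -
      have "\<bar>h x - \<Phi> x\<bar> \<le> \<bar>h x - \<Psi> x\<bar>" using h1[of x] by (simp add: \<Phi>_def)
      also have "h x - \<Psi> x = (\<Sum>t\<in>S. \<sigma> t * (indicator (D t) x - k t x))"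
        by (simp add: h_def \<Psi>_def g_def sum_subtractf[symmetric] algebra_simps)
      also have "\<bar>\<dots>\<bar> \<le> (\<Sum>t\<in>S. \<bar>\<sigma> t * (indicator (D t) x - k t x)\<bar>)" by (rule sum_abs)
      also have "\<dots> \<le> e x" unfolding e_def abs_mult
        by (intro sum_mono) (use sig in \<open>auto intro: mult_left_le_one_le\<close>)
      finally show ?thesis .
    qed
    have km: "k t \<in> borel_measurable borel" if "t \<in> S" for t using k[OF that] by (simp add: borel_measurable_continuous_onI)
    have em: "(\<lambda>x. \<bar>indicator (D t) x - k t x\<bar>) \<in> borel_measurable borel" if "t \<in> S" for t
    proof -
      have [measurable]: "k t \<in> borel_measurable borel" using km that .
      have [measurable]: "D t \<in> sets borel" using D that by simp
      show ?thesis by measurable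
    qed
    have eb: "\<bar>indicator (D t) x - k t x\<bar> \<le> (1::real)" if "t \<in> S" for t x
      using k[OF that] by (auto simp: indicator_def)
    have bnd: "(\<integral>x. \<bar>h x - \<Phi> x\<bar> \<partial>M) \<le> real (card S) * \<delta>"
      if r: "regular_borel_measure M" and kb: "\<And>t. t \<in> S \<Longrightarrow> (\<integral>x. \<bar>indicator (D t) x - k t x\<bar> \<partial>M) \<le> \<delta>" for M
    proof -
      have ei: "integrable M (\<lambda>x. \<bar>indicator (D t) x - k t x\<bar>)" if "t \<in> S" for t
        using rbm_integrable[OF r em[OF that], of 1] eb[OF that] by simp
      have "(\<integral>x. \<bar>h x - \<Phi> x\<bar> \<partial>M) \<le> (\<integral>x. e x \<partial>M)"
      proof (rule integral_mono)
        show "integrable M (\<lambda>x. \<bar>h x - \<Phi> x\<bar>)"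
        proof (rule rbm_integrable[OF r, of _ 2])
          have [measurable]: "h \<in> borel_measurable borel" using hm .
          have [measurable]: "\<Phi> \<in> borel_measurable borel" using \<Phi>c by (simp add: borel_measurable_continuous_onI)
          show "(\<lambda>x. \<bar>h x - \<Phi> x\<bar>) \<in> borel_measurable borel" by measurable
          show "\<bar>\<bar>h x - \<Phi> x\<bar>\<bar> \<le> 2" for x using h1[of x] \<Phi>1[of x] by arith
        qed
        show "integrable M e" unfolding e_def using ei S by auto
      qed (use hP in auto)
      also have "\<dots> = (\<Sum>t\<in>S. \<integral>x. \<bar>indicator (D t) x - k t x\<bar> \<partial>M)"
        unfolding e_def using ei Bochner_Integration.integral_sum[where I=S and M=M and f="\<lambda>t x. \<bar>indicator (D t) x - k t x\<bar>"] by simp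
      also have "\<dots> \<le> (\<Sum>t\<in>S. \<delta>)" by (intro sum_mono kb)
      finally show ?thesis by simp
    qed
    have hPi: "integrable M (\<lambda>x. h x - \<Phi> x)" if r: "regular_borel_measure M" for M
    proof (rule rbm_integrable[OF r, of _ 2])
      have [measurable]: "h \<in> borel_measurable borel" using hm .
      have [measurable]: "\<Phi> \<in> borel_measurable borel" using \<Phi>c by (simp add: borel_measurable_continuous_onI)
      show "(\<lambda>x. h x - \<Phi> x) \<in> borel_measurable borel" by measurable
      show "\<bar>h x - \<Phi> x\<bar> \<le> 2" for x using h1[of x] \<Phi>1[of x] by arith
    qed
    have hi: "integrable M h" if r: "regular_borel_measure M" for M
      using rbm_integrable[OF r hm, of 1] h1 by simp
    have \<Phi>i: "integrable M \<Phi>" if r: "regular_borel_measure M" for M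
      using rbm_integrable[OF r borel_measurable_continuous_onI[OF \<Phi>c], of 1] \<Phi>1 by simp
    have "integral_signed M1 M2 h = integral_signed M1 M2 \<Phi> + integral_signed M1 M2 (\<lambda>x. h x - \<Phi> x)"
      using Lam_diff[of M1 h \<Phi> M2] hi \<Phi>i r1 r2 by simp
    moreover have "\<bar>integral_signed M1 M2 (\<lambda>x. h x - \<Phi> x)\<bar> \<le> real (card S) * \<delta> + real (card S) * \<delta>"
    proof -
      have "(\<integral>x. \<bar>h x - \<Phi> x\<bar> \<partial>M1) \<le> real (card S) * \<delta>" using bnd[OF r1] k by blast
      moreover have "(\<integral>x. \<bar>h x - \<Phi> x\<bar> \<partial>M2) \<le> real (card S) * \<delta>" using bnd[OF r2] k by blast
      ultimately show ?thesis using Lam_abs_le[OF hPi[OF r1] hPi[OF r2]] by linarith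
    qed
    moreover have "real (card S) * \<delta> + real (card S) * \<delta> \<le> \<epsilon>"
    proof -
      have "(real (card S) + 1) * \<delta> = \<epsilon> / 2" unfolding \<delta>_def
        by (simp add: field_simps add_nonneg_eq_0_iff)
      then show ?thesis using d by (simp add: algebra_simps)
    qed
    ultimately show ?thesis using CP by linarith
  qed
  then have "\<bar>integral_signed M1 M2 h\<bar> \<le> C" by (rule field_le_epsilon)
  then show ?thesis using eqh unfolding g_def by simp
qed



lemma bcont_complete: "complete (UNIV :: ('a::topological_space \<Rightarrow>\<^sub>C real) set)"
  unfolding complete_def
proof (intro allI impI)
  fix f :: "nat \<Rightarrow> ('a, real) bcontfun"
  assume "(\<forall>n. f n \<in> UNIV) \<and> Cauchy f"
  then have "Cauchy f" by simp
  then obtain g where "uniform_limit UNIV f g sequentially"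
    using uniformly_convergent_eq_cauchy[of "\<lambda>_. True" f]
    unfolding Cauchy_def uniform_limit_sequentially_iff
    by (metis dist_fun_lt_imp_dist_val_lt)
  from uniform_limit_bcontfunE[OF this sequentially_bot]
  obtain l' where "g = apply_bcontfun l'" "(f \<longlonglongrightarrow> l')" by metis
  then show "\<exists>l\<in>UNIV. f \<longlonglongrightarrow> l" by blast
qed

lemma bcont_cms: "completely_metrizable_space (euclidean :: ('a::topological_space \<Rightarrow>\<^sub>C real) topology)"
  using Met_TC.completely_metrizable_space_mtopology bcont_complete by auto

lemma Lam_lipschitz:
  fixes M1 M2 :: "'a::topological_space measure"
  assumes cpt: "compact (UNIV :: 'a set)" and r1: "regular_borel_measure M1" and r2: "regular_borel_measure M2"
  shows "continuous_on UNIV (\<lambda>F :: ('a \<Rightarrow>\<^sub>C real). integral_signed M1 M2 (apply_bcontfun F))"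
proof -
  have bnd: "(\<integral>x. \<bar>apply_bcontfun H x\<bar> \<partial>M) \<le> norm H * measure M UNIV"
    if r: "regular_borel_measure M" for M and H :: "'a \<Rightarrow>\<^sub>C real"
  proof -
    interpret finite_measure M using r by (simp add: regular_borel_measure_def)
    have sp: "space M = UNIV" using r unfolding regular_borel_measure_def by (metis sets_eq_imp_space_eq space_borel)
    have "(\<integral>x. \<bar>apply_bcontfun H x\<bar> \<partial>M) \<le> (\<integral>x. norm H \<partial>M)"
      by (rule integral_mono)
         (use cont_integrable[OF cpt r] norm_bounded[of H] in \<open>auto intro!: integrable_abs\<close>)
    also have "\<dots> = norm H * measure M UNIV" using sp by simp
    finally show ?thesis .
  qed
  have ci: "integrable M (apply_bcontfun H)" if "regular_borel_measure M" for M and H :: "'a \<Rightarrow>\<^sub>C real"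
    using cont_integrable[OF cpt that] by simp
  have "(measure M1 UNIV + measure M2 UNIV)-lipschitz_on UNIV (\<lambda>F :: ('a \<Rightarrow>\<^sub>C real). integral_signed M1 M2 (apply_bcontfun F))"
  proof (rule lipschitz_onI)
    fix F G :: "'a \<Rightarrow>\<^sub>C real"
    have "integral_signed M1 M2 (apply_bcontfun F) - integral_signed M1 M2 (apply_bcontfun G)
      = integral_signed M1 M2 (apply_bcontfun (F - G))"
      using Lam_diff[of M1 "apply_bcontfun F" "apply_bcontfun G" M2] ci r1 r2 by simp
    also have "\<bar>\<dots>\<bar> \<le> norm (F - G) * measure M1 UNIV + norm (F - G) * measure M2 UNIV"
      using Lam_abs_le[OF ci[OF r1] ci[OF r2], of "F - G"] bnd[OF r1, of "F - G"] bnd[OF r2, of "F - G"] by linarith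
    finally show "dist (integral_signed M1 M2 (apply_bcontfun F)) (integral_signed M1 M2 (apply_bcontfun G))
       \<le> (measure M1 UNIV + measure M2 UNIV) * dist F G"
      by (simp add: dist_real_def dist_norm algebra_simps)
  qed simp
  then show ?thesis by (rule lipschitz_on_continuous_on)
qed

lemma ubp:
  fixes Mp Mn :: "'i \<Rightarrow> 'a::topological_space measure"
  assumes cpt: "compact (UNIV::'a set)"
    and r: "\<forall>i\<in>I. regular_borel_measure (Mp i) \<and> regular_borel_measure (Mn i)"
    and w: "weak_star_null I Mp Mn"
  shows "\<exists>C. \<forall>i\<in>I. \<forall>f. continuous_on UNIV f \<longrightarrow> (\<forall>x. \<bar>f x\<bar> \<le> 1) \<longrightarrow> \<bar>integral_signed (Mp i) (Mn i) f\<bar> \<le> C"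
proof -
  define \<Lambda> where "\<Lambda> i F = integral_signed (Mp i) (Mn i) (apply_bcontfun F)" for i and F :: "'a \<Rightarrow>\<^sub>C real"
  define E where "E n = {F. \<forall>i\<in>I. \<bar>\<Lambda> i F\<bar> \<le> real n}" for n :: nat
  have clE: "closed (E n)" for n
  proof -
    have "E n = (\<Inter>i\<in>I. {F. \<bar>\<Lambda> i F\<bar> \<le> real n})" by (auto simp: E_def)
    moreover have "closed {F. \<bar>\<Lambda> i F\<bar> \<le> real n}" if "i \<in> I" for i
      using Lam_lipschitz[OF cpt, of "Mp i" "Mn i"] r that unfolding \<Lambda>_def
      by (intro closed_Collect_le continuous_intros) auto
    ultimately show ?thesis by (auto intro: closed_INT)
  qed
  have cover: "\<exists>n. F \<in> E n" for F
  proof -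
    have "lim_zero_on I (\<lambda>i. \<Lambda> i F)" using w unfolding weak_star_null_def \<Lambda>_def by simp
    then have fin: "finite {i \<in> I. 1 \<le> \<bar>\<Lambda> i F\<bar>}" unfolding lim_zero_on_def by (meson zero_less_one)
    define B where "B = 1 + (\<Sum>i\<in>{i \<in> I. 1 \<le> \<bar>\<Lambda> i F\<bar>}. \<bar>\<Lambda> i F\<bar>)"
    have "\<bar>\<Lambda> i F\<bar> \<le> B" if "i \<in> I" for i
    proof (cases "1 \<le> \<bar>\<Lambda> i F\<bar>")
      case True
      then have "\<bar>\<Lambda> i F\<bar> \<le> (\<Sum>i\<in>{i \<in> I. 1 \<le> \<bar>\<Lambda> i F\<bar>}. \<bar>\<Lambda> i F\<bar>)"
        using that fin by (intro member_le_sum) auto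
      then show ?thesis by (simp add: B_def)
    next
      case False
      have "0 \<le> (\<Sum>i\<in>{i \<in> I. 1 \<le> \<bar>\<Lambda> i F\<bar>}. \<bar>\<Lambda> i F\<bar>)" by (intro sum_nonneg) auto
      then show ?thesis using False unfolding B_def by linarith
    qed
    then have "\<forall>i\<in>I. \<bar>\<Lambda> i F\<bar> \<le> real (nat \<lceil>B\<rceil>)" using real_nat_ceiling_ge[of B] by (meson order_trans)
    then have "F \<in> E (nat \<lceil>B\<rceil>)" unfolding E_def by blast
    then show ?thesis by blast
  qed
  have "\<exists>n. interior (E n) \<noteq> {}"
  proof (rule ccontr)
    assume neg: "\<not> ?thesis"
    have "euclidean interior_of \<Union>(range E) = {}"
    proof (rule Baire_category_alt)
      show "completely_metrizable_space (euclidean :: ('a \<Rightarrow>\<^sub>C real) topology) \<or> locally_compact_space (euclidean :: ('a \<Rightarrow>\<^sub>C real) topology) \<and> regular_space (euclidean :: ('a \<Rightarrow>\<^sub>C real) topology)"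
        using bcont_cms by blast
      show "countable (range E)" by simp
      fix T assume "T \<in> range E"
      then obtain m where m: "T = E m" by blast
      have "closed T" using clE m by simp
      then have "closedin euclidean T" using closed_closedin by blast
      moreover have "interior T = {}" using neg m by blast
      ultimately show "closedin euclidean T \<and> euclidean interior_of T = {}"
        by simp
    qed
    moreover have "\<Union>(range E) = UNIV" using cover by blast
    ultimately show False by simp
  qed
  then obtain n F0 where "F0 \<in> interior (E n)" by blast
  then obtain \<rho> where \<rho>: "\<rho> > 0" "ball F0 \<rho> \<subseteq> E n"
  proof -
    obtain \<rho> where "\<rho> > 0" "ball F0 \<rho> \<subseteq> interior (E n)"
      using \<open>F0 \<in> interior (E n)\<close> open_contains_ball_eq[OF open_interior] by blast
    then show ?thesis using that interior_subset by blast
  qed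
  have ci: "integrable M (apply_bcontfun H)" if "regular_borel_measure M" for M and H :: "'a \<Rightarrow>\<^sub>C real"
    using cont_integrable[OF cpt that] by simp
  show ?thesis
  proof (intro exI[of _ "4 * real n / \<rho>"] ballI allI impI)
    fix i and f :: "'a \<Rightarrow> real" assume i: "i \<in> I" and fc: "continuous_on UNIV f" and f1: "\<forall>x. \<bar>f x\<bar> \<le> 1"
    have "f \<in> bcontfun" using fc f1 by (intro bcontfun_normI) auto
    then obtain G where G: "apply_bcontfun G = f" by (metis Bcontfun_inverse)
    have nG: "norm G \<le> 1" by (rule norm_bound) (use f1 G in auto)
    have "dist F0 (F0 + (\<rho>/2) *\<^sub>R G) = \<rho>/2 * norm G" using \<rho> by (simp add: dist_norm)
    also have "\<dots> \<le> \<rho>/2" using nG \<rho> by (simp add: mult_left_le)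
    also have "\<dots> < \<rho>" using \<rho> by simp
    finally have "F0 + (\<rho>/2) *\<^sub>R G \<in> E n" using \<rho> by auto
    then have a1: "\<bar>\<Lambda> i (F0 + (\<rho>/2) *\<^sub>R G)\<bar> \<le> n" using i by (simp add: E_def)
    have "F0 \<in> E n" using \<rho> by auto
    then have a2: "\<bar>\<Lambda> i F0\<bar> \<le> n" using i by (simp add: E_def)
    have lin: "\<Lambda> i (F0 + (\<rho>/2) *\<^sub>R G) = \<Lambda> i F0 + (\<rho>/2) * \<Lambda> i G"
      using ci[of "Mp i"] ci[of "Mn i"] r i
      by (simp add: \<Lambda>_def integral_signed_def algebra_simps)
    have "\<bar>(\<rho>/2) * \<Lambda> i G\<bar> \<le> 2 * n" using a1 a2 lin by linarith
    then have "(\<rho>/2) * \<bar>\<Lambda> i G\<bar> \<le> 2 * n" using \<rho> by (simp add: abs_mult)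
    then have "\<bar>\<Lambda> i G\<bar> \<le> 4 * n / \<rho>" using \<rho> by (simp add: field_simps)
    then show "\<bar>integral_signed (Mp i) (Mn i) f\<bar> \<le> 4 * real n / \<rho>" by (simp add: \<Lambda>_def G)
  qed
qed



lemma c0l1_empty: "type_c0l1 I F {}"
  unfolding type_c0l1_def by (intro exI[of _ "\<lambda>i t. 0"] exI[of _ "\<lambda>i t. 0"]) auto

lemma c0l1_union:
  assumes "type_c0l1 I F A" "type_c0l1 I F B"
  shows "type_c0l1 I F (A \<union> B)"
proof -
  obtain a1 b1 C1 where 1: "\<forall>i\<in>I. \<forall>t\<in>A. F i t = a1 i t + b1 i t" "\<forall>t\<in>A. lim_zero_on I (\<lambda>i. a1 i t)"
    "\<forall>i\<in>I. \<forall>S. S \<subseteq> A \<and> finite S \<longrightarrow> (\<Sum>t\<in>S. \<bar>b1 i t\<bar>) \<le> C1"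
    using assms(1) unfolding type_c0l1_def by blast
  obtain a2 b2 C2 where 2: "\<forall>i\<in>I. \<forall>t\<in>B. F i t = a2 i t + b2 i t" "\<forall>t\<in>B. lim_zero_on I (\<lambda>i. a2 i t)"
    "\<forall>i\<in>I. \<forall>S. S \<subseteq> B \<and> finite S \<longrightarrow> (\<Sum>t\<in>S. \<bar>b2 i t\<bar>) \<le> C2"
    using assms(2) unfolding type_c0l1_def by blast
  define a where "a i t = (if t \<in> A then a1 i t else a2 i t)" for i t
  define b where "b i t = (if t \<in> A then b1 i t else b2 i t)" for i t
  have "\<forall>i\<in>I. \<forall>S. S \<subseteq> A \<union> B \<and> finite S \<longrightarrow> (\<Sum>t\<in>S. \<bar>b i t\<bar>) \<le> C1 + C2"
  proof (intro ballI allI impI)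
    fix i S assume i: "i \<in> I" and S: "S \<subseteq> A \<union> B \<and> finite S"
    have "(\<Sum>t\<in>S. \<bar>b i t\<bar>) = (\<Sum>t\<in>S \<inter> A. \<bar>b i t\<bar>) + (\<Sum>t\<in>S - A. \<bar>b i t\<bar>)"
    proof -
      have "S = (S \<inter> A) \<union> (S - A)" by blast
      then show ?thesis using S sum.union_disjoint[of "S \<inter> A" "S - A" "\<lambda>t. \<bar>b i t\<bar>"]
        by (metis Diff_disjoint finite_Diff finite_Int inf_commute inf_left_commute inf_bot_right)
    qed
    also have "(\<Sum>t\<in>S \<inter> A. \<bar>b i t\<bar>) = (\<Sum>t\<in>S \<inter> A. \<bar>b1 i t\<bar>)" by (simp add: b_def)
    also have "(\<Sum>t\<in>S - A. \<bar>b i t\<bar>) = (\<Sum>t\<in>S - A. \<bar>b2 i t\<bar>)" by (simp add: b_def)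
    also have "(\<Sum>t\<in>S \<inter> A. \<bar>b1 i t\<bar>) \<le> C1" using 1(3) i S by auto
    also have "(\<Sum>t\<in>S - A. \<bar>b2 i t\<bar>) \<le> C2"
    proof -
      have "S - A \<subseteq> B \<and> finite (S - A)" using S by auto
      then show ?thesis using 2(3) i by blast
    qed
    finally show "(\<Sum>t\<in>S. \<bar>b i t\<bar>) \<le> C1 + C2" by simp
  qed
  moreover have "\<forall>i\<in>I. \<forall>t\<in>A \<union> B. F i t = a i t + b i t" using 1(1) 2(1) by (auto simp: a_def b_def)
  moreover have "\<forall>t\<in>A \<union> B. lim_zero_on I (\<lambda>i. a i t)"
  proof
    fix t assume "t \<in> A \<union> B"
    then show "lim_zero_on I (\<lambda>i. a i t)"
      by (cases "t \<in> A") (use 1(2) 2(2) in \<open>auto simp: a_def\<close>)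
  qed
  ultimately show ?thesis unfolding type_c0l1_def by blast
qed

definition Pgood :: "'a::linorder set \<Rightarrow> 'a \<Rightarrow> ('a \<Rightarrow> real) \<Rightarrow> nat \<Rightarrow> 'a set \<Rightarrow> bool" where
  "Pgood B t f c E \<longleftrightarrow> (\<forall>x. x \<notin> E \<longrightarrow> indicator {..t} x = f x) \<and>
     (c = 0 \<and> (E = {} \<or> (\<exists>s. t < s \<and> E \<subseteq> {t<..<s} \<and> {t<..<s} \<inter> B = {}))
      \<or> c = 1 \<and> (\<exists>s. s < t \<and> E \<subseteq> {s<..t} \<and> {s<..<t} \<inter> B = {})
      \<or> c = 2 \<and> (\<forall>s. t \<le> s))"

lemma Pgood_ex:
  fixes B :: "'a::linorder_topology set"
  assumes cpt: "compact (UNIV :: 'a set)" and t: "t \<in> B" "t \<notin> Der B"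
  shows "\<exists>f c E. continuous_on UNIV f \<and> (\<forall>x. \<bar>indicator {..t} x - f x\<bar> \<le> (1::real)) \<and> c < 3 \<and> Pgood B t f c E"
proof (cases "\<exists>s. t < s")
  case False
  then have "\<forall>x. x \<le> t" by (meson not_le)
  then show ?thesis
    by (intro exI[of _ "\<lambda>_. 1"] exI[of _ 0] exI[of _ "{}"]) (auto simp: Pgood_def)
next
  case up: True
  show ?thesis
  proof (cases "\<exists>s. s < t")
    case False
    then have "\<forall>x. t \<le> x" by (meson not_le)
    then show ?thesis
      by (intro exI[of _ "\<lambda>_. 0"] exI[of _ 2] exI[of _ "UNIV"]) (auto simp: Pgood_def)
  next
    case dn: True
    then obtain s1 s2 where s: "s1 < t" "t < s2" "{s1<..<t} \<inter> B = {} \<or> {t<..<s2} \<inter> B = {}"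
      using up t unfolding Der_def by blast
    show ?thesis
    proof (cases "{t<..<s2} \<inter> B = {}")
      case True
      have "{s2..} \<inter> {..t} = {}" using s by auto
      then obtain k where k: "continuous_on UNIV k" "\<And>x. 0 \<le> k x \<and> k x \<le> (1::real)"
        "\<And>x. x \<in> {s2..} \<Longrightarrow> k x = 0" "\<And>x. x \<in> {..t} \<Longrightarrow> k x = 1"
        using urysohn_euc[OF cpt, of "{s2..}" "{..t}"] by auto
      have "Pgood B t k 0 {t<..<s2}"
        unfolding Pgood_def using True s k(3,4) by (auto simp: indicator_def not_less)
      moreover have "\<forall>x. \<bar>indicator {..t} x - k x\<bar> \<le> (1::real)"
        using k(2) by (auto simp: indicator_def)
      ultimately show ?thesis using k(1) by (intro exI[of _ k] exI[of _ "0::nat"] exI[of _ "{t<..<s2}"]) simp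
    next
      case False
      then have L: "{s1<..<t} \<inter> B = {}" using s by blast
      have "{t..} \<inter> {..s1} = {}" using s by auto
      then obtain k where k: "continuous_on UNIV k" "\<And>x. 0 \<le> k x \<and> k x \<le> (1::real)"
        "\<And>x. x \<in> {t..} \<Longrightarrow> k x = 0" "\<And>x. x \<in> {..s1} \<Longrightarrow> k x = 1"
        using urysohn_euc[OF cpt, of "{t..}" "{..s1}"] by auto
      have "\<forall>x. x \<notin> {s1<..t} \<longrightarrow> indicator {..t} x = k x"
      proof (intro allI impI)
        fix x assume "x \<notin> {s1<..t}"
        then have "x \<le> s1 \<or> t < x" by auto
        then show "indicator {..t} x = k x"
          using k(3,4)[of x] s(1) by (auto simp: indicator_def)
      qed
      then have "Pgood B t k 1 {s1<..t}"
        unfolding Pgood_def using L s by auto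
      moreover have "\<forall>x. \<bar>indicator {..t} x - k x\<bar> \<le> (1::real)"
        using k(2) by (auto simp: indicator_def)
      ultimately show ?thesis using k(1) by (intro exI[of _ k] exI[of _ "1::nat"] exI[of _ "{s1<..t}"]) simp
    qed
  qed
qed

lemma Pgood_disj_lt:
  fixes B :: "'a::linorder set"
  assumes "t \<in> B" "t' \<in> B" "t < t'" "Pgood B t f c E" "Pgood B t' f' c E'"
  shows "E \<inter> E' = {}"
proof -
  consider "c = 0" | "c = 1" | "c = 2" | "c \<noteq> 0 \<and> c \<noteq> 1 \<and> c \<noteq> 2" by blast
  then show ?thesis
  proof cases
    case 1
    then have A: "E = {} \<or> (\<exists>s. t < s \<and> E \<subseteq> {t<..<s} \<and> {t<..<s} \<inter> B = {})"
      and A': "E' = {} \<or> (\<exists>s. t' < s \<and> E' \<subseteq> {t'<..<s} \<and> {t'<..<s} \<inter> B = {})"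
      using assms(4,5) unfolding Pgood_def by auto
    show ?thesis
    proof (cases "E = {} \<or> E' = {}")
      case True then show ?thesis by auto
    next
      case False
      then obtain s s' where "E \<subseteq> {t<..<s}" "{t<..<s} \<inter> B = {}" "E' \<subseteq> {t'<..<s'}"
        using A A' by blast
      moreover have "s \<le> t'" using \<open>{t<..<s} \<inter> B = {}\<close> assms(2,3) by (meson disjoint_iff greaterThanLessThan_iff not_le)
      ultimately show ?thesis by fastforce
    qed
  next
    case 2
    then obtain s s' where "E \<subseteq> {s<..t}" "E' \<subseteq> {s'<..t'}" "{s'<..<t'} \<inter> B = {}"
      using assms(4,5) unfolding Pgood_def by auto
    moreover have "t \<le> s'" using \<open>{s'<..<t'} \<inter> B = {}\<close> assms(1,3) by (meson disjoint_iff greaterThanLessThan_iff not_le)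
    ultimately show ?thesis by fastforce
  next
    case 3
    then have "t' \<le> t" using assms(5) unfolding Pgood_def by auto
    then show ?thesis using assms(3) by simp
  next
    case 4
    then show ?thesis using assms(4) unfolding Pgood_def by auto
  qed
qed

lemma Pgood_disj:
  fixes B :: "'a::linorder set"
  assumes "t \<in> B" "t' \<in> B" "t \<noteq> t'" "Pgood B t f c E" "Pgood B t' f' c E'"
  shows "E \<inter> E' = {}"
  using assms Pgood_disj_lt[of t B t' f c E f' E'] Pgood_disj_lt[of t' B t f' c E' f E]
  by (metis inf_commute linorder_neqE)

lemma nonDer:
  fixes Mp Mn :: "'i \<Rightarrow> 'a::linorder_topology measure" and B :: "'a set"
  assumes cpt: "compact (UNIV :: 'a set)"
    and r: "\<forall>i\<in>I. regular_borel_measure (Mp i) \<and> regular_borel_measure (Mn i)"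
    and w: "weak_star_null I Mp Mn"
  shows "type_c0l1 I (\<lambda>i. F_of (Mp i) (Mn i)) (B - Der B)"
proof -
  obtain C0 where C0: "\<forall>i\<in>I. \<forall>f. continuous_on UNIV f \<longrightarrow> (\<forall>x. \<bar>f x\<bar> \<le> 1) \<longrightarrow> \<bar>integral_signed (Mp i) (Mn i) f\<bar> \<le> C0"
    using ubp[OF cpt r w] by blast
  have "\<forall>t\<in>B - Der B. \<exists>f c E. continuous_on UNIV f \<and> (\<forall>x. \<bar>indicator {..t} x - f x\<bar> \<le> (1::real)) \<and> c < 3 \<and> Pgood B t f c E"
    using Pgood_ex[OF cpt] by blast
  then obtain fF cF EF where P: "\<And>t. t \<in> B - Der B \<Longrightarrow> continuous_on UNIV (fF t) \<and> (\<forall>x. \<bar>indicator {..t} x - fF t x\<bar> \<le> (1::real)) \<and> cF t < 3 \<and> Pgood B t (fF t) (cF t) (EF t)"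
    by metis
  define a where "a i t = integral_signed (Mp i) (Mn i) (fF t)" for i t
  define b where "b i t = F_of (Mp i) (Mn i) t - a i t" for i t
  have ind: "integral\<^sup>L M (indicator {..t}) = measure M {..t}" if "regular_borel_measure M" for M and t :: 'a
  proof -
    interpret finite_measure M using that by (simp add: regular_borel_measure_def)
    have "{..t} \<in> sets M" using that by (simp add: regular_borel_measure_def)
    then show ?thesis by (simp add: emeasure_eq_measure)
  qed
  have indi: "integrable M (indicator {..t} :: 'a \<Rightarrow> real)" if "regular_borel_measure M" for M and t :: 'a
  proof -
    interpret finite_measure M using that by (simp add: regular_borel_measure_def)
    have "{..t} \<in> sets M" using that by (simp add: regular_borel_measure_def)
    then show ?thesis by (simp add: emeasure_eq_measure)
  qed
  have beq: "b i t = integral_signed (Mp i) (Mn i) (\<lambda>x. indicator {..t} x - fF t x)"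
    if i: "i \<in> I" and t: "t \<in> B - Der B" for i t
  proof -
    have ri: "regular_borel_measure (Mp i)" "regular_borel_measure (Mn i)" using r i by auto
    have fi: "integrable (Mp i) (fF t)" "integrable (Mn i) (fF t)"
      using cont_integrable[OF cpt ri(1)] cont_integrable[OF cpt ri(2)] P[OF t] by auto
    show ?thesis
      using Lam_diff[OF indi[OF ri(1)] fi(1) indi[OF ri(2)] fi(2), of t] ind[OF ri(1), of t] ind[OF ri(2), of t]
      by (simp add: b_def a_def F_of_def integral_signed_def)
  qed
  have bound: "(\<Sum>t\<in>S. \<bar>b i t\<bar>) \<le> 3 * C0" if i: "i \<in> I" and S: "S \<subseteq> B - Der B" "finite S" for i S
  proof -
    have ri: "regular_borel_measure (Mp i)" "regular_borel_measure (Mn i)" using r i by auto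
    have "(\<Sum>t\<in>S. \<bar>b i t\<bar>) = (\<Sum>c\<in>{..<3::nat}. \<Sum>t\<in>{t. t \<in> S \<and> cF t = c}. \<bar>b i t\<bar>)"
      using S P by (intro sum.group[symmetric]) auto
    also have "\<dots> \<le> (\<Sum>c\<in>{..<3::nat}. C0)"
    proof (intro sum_mono)
      fix c :: nat
      define Sc where "Sc = {t. t \<in> S \<and> cF t = c}"
      have Sc: "Sc \<subseteq> B - Der B" "finite Sc" using S by (auto simp: Sc_def)
      have "(\<Sum>t\<in>Sc. \<bar>integral_signed (Mp i) (Mn i) (\<lambda>x. indicator {..t} x - fF t x)\<bar>) \<le> C0"
      proof (rule sum_bound[OF cpt ri])
        show "\<forall>f. continuous_on UNIV f \<longrightarrow> (\<forall>x. \<bar>f x\<bar> \<le> 1) \<longrightarrow> \<bar>integral_signed (Mp i) (Mn i) f\<bar> \<le> C0"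
          using C0 i by blast
        show "finite Sc" by fact
        show "\<forall>t\<in>Sc. closed {..t}" by simp
        show "\<forall>t\<in>Sc. continuous_on UNIV (fF t)" using P Sc by blast
        show "\<forall>t\<in>Sc. \<forall>x. \<bar>indicator {..t} x - fF t x\<bar> \<le> (1::real)" using P Sc by blast
        show "\<forall>t\<in>Sc. \<forall>t'\<in>Sc. t \<noteq> t' \<longrightarrow> (\<forall>x. indicator {..t} x = fF t x \<or> indicator {..t'} x = fF t' x)"
        proof (intro ballI impI allI)
          fix t t' x assume tt: "t \<in> Sc" "t' \<in> Sc" "t \<noteq> t'"
          have tB: "t \<in> B - Der B" "t' \<in> B - Der B" using tt Sc by auto
          have cc: "cF t = c" "cF t' = c" using tt by (auto simp: Sc_def)
          have g: "Pgood B t (fF t) c (EF t)" "Pgood B t' (fF t') c (EF t')"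
            using P[OF tB(1)] P[OF tB(2)] cc by auto
          have "EF t \<inter> EF t' = {}"
            by (rule Pgood_disj[OF _ _ tt(3) g]) (use tt Sc in auto)
          then have "x \<notin> EF t \<or> x \<notin> EF t'" by blast
          then show "indicator {..t} x = fF t x \<or> indicator {..t'} x = fF t' x"
            using g unfolding Pgood_def by blast
        qed
      qed
      then show "(\<Sum>t\<in>{t. t \<in> S \<and> cF t = c}. \<bar>b i t\<bar>) \<le> C0"
        using beq[OF i] Sc by (simp add: Sc_def subset_iff)
    qed
    also have "\<dots> = 3 * C0" by simp
    finally show ?thesis .
  qed
  have lim: "lim_zero_on I (\<lambda>i. a i t)" if "t \<in> B - Der B" for t
    using w P[OF that] unfolding weak_star_null_def a_def by blast
  show ?thesis
    unfolding type_c0l1_def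
  proof (rule exI[of _ a], rule exI[of _ b], intro conjI)
    show "\<exists>C. \<forall>i\<in>I. \<forall>S. S \<subseteq> B - Der B \<and> finite S \<longrightarrow> (\<Sum>t\<in>S. \<bar>b i t\<bar>) \<le> C"
      using bound by blast
  qed (use lim in \<open>auto simp: b_def\<close>)
qed

lemma Der_subset: "Der B \<subseteq> B"
  by (auto simp: Der_def)

theorem proposition2p9:
  fixes I :: "'i set"
    and Mp Mn :: "'i \<Rightarrow> 'a::linorder_topology measure"
    and A :: "'a set"
  assumes "compact (UNIV :: 'a set)"
    and "\<forall>i\<in>I. regular_borel_measure (Mp i) \<and> regular_borel_measure (Mn i)"
    and "weak_star_null I Mp Mn"
    and "finite_two_sided_height A"
  shows "type_c0l1 I (\<lambda>i. F_of (Mp i) (Mn i)) A"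
proof -
  obtain n where n: "(Der ^^ n) A = {}" using assms(4) unfolding finite_two_sided_height_def by blast
  have "\<forall>B. (Der ^^ n) B = {} \<longrightarrow> type_c0l1 I (\<lambda>i. F_of (Mp i) (Mn i)) B"
  proof (induction n)
    case 0
    then show ?case by (auto simp: c0l1_empty)
  next
    case (Suc n)
    show ?case
    proof (intro allI impI)
      fix B :: "'a set" assume "(Der ^^ Suc n) B = {}"
      then have "(Der ^^ n) (Der B) = {}" by (simp add: funpow_Suc_right del: funpow.simps)
      then have "type_c0l1 I (\<lambda>i. F_of (Mp i) (Mn i)) (Der B)" using Suc.IH by blast
      moreover have "type_c0l1 I (\<lambda>i. F_of (Mp i) (Mn i)) (B - Der B)"
        by (rule nonDer[OF assms(1-3)])
      ultimately have "type_c0l1 I (\<lambda>i. F_of (Mp i) (Mn i)) ((B - Der B) \<union> Der B)"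
        by (intro c0l1_union)
      moreover have "(B - Der B) \<union> Der B = B" using Der_subset by blast
      ultimately show "type_c0l1 I (\<lambda>i. F_of (Mp i) (Mn i)) B" by simp
    qed
  qed
  then show ?thesis using n by blast
qed

end
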